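(* A twisted graph $T=(\vec G,G,\prec,A)$ which has a positive sequence on $F$ is simplicial (on $F$).
   Context: Signed sets on a finite set $E$: pairs $X=(X^+,X^-)$ of disjoint subsets, $X(e)=+1,-1,0$ according as $e\in X^+$, $e\in X^-$, or neither; support $\underline X=X^+\cup X^-$. Conformal: no $e$ with $X(e)=-Y(e)\ne0$; composition $(X\circ Y)(e)=X(e)$ if $X(e)\ne0$, else $Y(e)$. For a total order $<$ on $E$, $\mathcal C(<)=\{(\{e_1,e_3\},\{e_2\}),(\{e_2\},\{e_1,e_3\}):e_1<e_2<e_3\}$ (circuits of the rank 2 oriented matroid $\mathcal M(<)$; vectors are compositions of pairwise conformal families of circuits); for a partial order $\prec$, $\mathcal C(\prec)=\bigcap_{<\supseteq\prec}\mathcal C(<)$. For a directed graph $\vec G=(V,\vec E)$ (no loops, parallel or antiparallel edges), underlying simple graph $G=(V,E)$, a strong map $\mathcal M^*(\vec G)\to\mathcal M(<)$ means every signed minimal cut $(\{(u,w):u\in S,w\notin S\},\{(u,w):w\in S,u\notin S\})$ ($S$, $V\setminus S$ inducing connected subgraphs) is a vector of $\mathcal M(<)$; $C^*_v=(\{(u,v)\in\vec E\},\{(v,u)\in\vec E\})$. A twisted graph $T=(\vec G,G,\prec,A)$: $\prec$ a partial order on $E$, $G$ three-edge-connected, $A\subset\mathcal C(\prec)$, a strong map $\mathcal M^*(\vec G)\to\mathcal M(<)$ for every total $<\supseteq\prec$, and a partition $A=\bigsqcup_v A_v$ with members of $A_v$ pairwise conformal and composing to $C^*_v$. $\boldsymbol\theta\in\mathbb{R}^E$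 respects $\prec$ if $0<\theta_e<180$ (degrees) and $\theta_e<\theta_f$ whenever $e\prec f$. $\Sigma(T)$ is the $|A|\times|E|$ matrix with $\Sigma_{a,e}=0$ if $e\notin\underline a$ and $\Sigma_{a,e}=a(e)\sin(\theta_{e''}-\theta_{e'})$ if $\underline a=\{e,e',e''\}$ with $e'\prec e''$. A matrix with $r+1$ rows and $r$ columns is a simplex if its rows have a linear dependency with all coefficients positive and every row dependency is a multiple of it. $T$ is simplicial on $F$ if for every $\boldsymbol\theta$ respecting $\prec$ the submatrix of $\Sigma(T)$ on columns $F$ is a simplex. A positive sequence for $T$ on $F$ is an enumeration $A=\{a_1,\dots,a_m\}$ ($m=|A|$) and an enumeration $F=\{f_2,\dots,f_m\}\subset E$ of distinct edges such that for each $2\le j\le m$: $a_j(f_j)\ne0$; $a_i(f_j)=0$ for all $i>j$; and $a_i(f_j)\in\{0,-a_j(f_j)\}$ for all $i<j$. *)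

theory Defs
  imports Complex_Main
begin

text \<open>A signed set on a ground set is a pair (X+, X-) of (disjoint) sets.\<close>
type_synonym 'e sset = "'e set \<times> 'e set"

definition sval :: "'e sset \<Rightarrow> 'e \<Rightarrow> int" where
  "sval X e = (if e \<in> fst X then 1 else if e \<in> snd X then -1 else 0)"

definition supp :: "'e sset \<Rightarrow> 'e set" where
  "supp X = fst X \<union> snd X"

definition conformal :: "'e sset \<Rightarrow> 'e sset \<Rightarrow> bool" where
  "conformal X Y \<longleftrightarrow> \<not> (\<exists>e. sval X e = - sval Y e \<and> sval X e \<noteq> 0)"

text \<open>Composition: (X o Y)(e) = X(e) if X(e) nonzero, else Y(e).\<close>
definition scomp :: "'e sset \<Rightarrow> 'e sset \<Rightarrow> 'e sset" where
  "scomp X Y = (fst X \<union> (fst Y - supp X), snd X \<union> (snd Y - supp X))"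

definition szero :: "'e sset" where
  "szero = ({}, {})"

definition scomp_list :: "'e sset list \<Rightarrow> 'e sset" where
  "scomp_list xs = foldr scomp xs szero"

definition pairwise_conformal :: "'e sset set \<Rightarrow> bool" where
  "pairwise_conformal S \<longleftrightarrow> (\<forall>X\<in>S. \<forall>Y\<in>S. conformal X Y)"

definition strict_partial_order_on :: "'e set \<Rightarrow> ('e \<times> 'e) set \<Rightarrow> bool" where
  "strict_partial_order_on E r \<longleftrightarrow> r \<subseteq> E \<times> E \<and> (\<forall>x. (x, x) \<notin> r) \<and> trans r"

definition strict_total_order_on :: "'e set \<Rightarrow> ('e \<times> 'e) set \<Rightarrow> bool" where
  "strict_total_order_on E r \<longleftrightarrow> strict_partial_order_on E r \<and>
     (\<forall>x\<in>E. \<forall>y\<in>E. x \<noteq> y \<longrightarrow> (x, y) \<in> r \<or> (y, x) \<in> r)"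

definition circ_total :: "('e \<times> 'e) set \<Rightarrow> 'e sset set" where
  "circ_total lt = {X. \<exists>e1 e2 e3. (e1, e2) \<in> lt \<and> (e2, e3) \<in> lt \<and>
      (X = ({e1, e3}, {e2}) \<or> X = ({e2}, {e1, e3}))}"

definition extensions :: "'e set \<Rightarrow> ('e \<times> 'e) set \<Rightarrow> ('e \<times> 'e) set set" where
  "extensions E prec = {lt. strict_total_order_on E lt \<and> prec \<subseteq> lt}"

definition circ_partial :: "'e set \<Rightarrow> ('e \<times> 'e) set \<Rightarrow> 'e sset set" where
  "circ_partial E prec = (\<Inter>lt\<in>extensions E prec. circ_total lt)"

definition is_vector :: "('e \<times> 'e) set \<Rightarrow> 'e sset \<Rightarrow> bool" where
  "is_vector lt X \<longleftrightarrow> (\<exists>cs. set cs \<subseteq> circ_total lt \<and> pairwise_conformal (set cs) \<and>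
       X = scomp_list cs)"

text \<open>A directed graph is a finite vertex set V with arcs D \<subseteq> V \<times> V, without loops
  and antiparallel arcs (parallel arcs are excluded since D is a set).
  The edge set E of the underlying simple graph G is identified with the arc set D.\<close>
definition digraph :: "'v set \<Rightarrow> ('v \<times> 'v) set \<Rightarrow> bool" where
  "digraph V D \<longleftrightarrow> finite V \<and> D \<subseteq> V \<times> V \<and> (\<forall>v. (v, v) \<notin> D) \<and>
     (\<forall>u w. (u, w) \<in> D \<longrightarrow> (w, u) \<notin> D)"

definition adj_in :: "('v \<times> 'v) set \<Rightarrow> 'v set \<Rightarrow> ('v \<times> 'v) set" where
  "adj_in D S = {(u, w). u \<in> S \<and> w \<in> S \<and> ((u, w) \<in> D \<or> (w, u) \<in> D)}"

definition connected_in :: "('v \<times> 'v) set \<Rightarrow> 'v set \<Rightarrow> bool" where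
  "connected_in D S \<longleftrightarrow> S \<noteq> {} \<and> (\<forall>u\<in>S. \<forall>w\<in>S. (u, w) \<in> (adj_in D S)\<^sup>*)"

text \<open>Three-edge-connected (Diestel's convention: at least two vertices, and removing
  fewer than three edges leaves the graph connected).\<close>
definition three_edge_connected :: "'v set \<Rightarrow> ('v \<times> 'v) set \<Rightarrow> bool" where
  "three_edge_connected V D \<longleftrightarrow> card V > 1 \<and>
     (\<forall>R. R \<subseteq> D \<and> card R < 3 \<longrightarrow> connected_in (D - R) V)"

definition signed_cut :: "('v \<times> 'v) set \<Rightarrow> 'v set \<Rightarrow> ('v \<times> 'v) sset" where
  "signed_cut D S = ({(u, w) \<in> D. u \<in> S \<and> w \<notin> S}, {(u, w) \<in> D. w \<in> S \<and> u \<notin> S})"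

definition signed_minimal_cuts :: "'v set \<Rightarrow> ('v \<times> 'v) set \<Rightarrow> ('v \<times> 'v) sset set" where
  "signed_minimal_cuts V D = {signed_cut D S | S. S \<subseteq> V \<and> connected_in D S \<and> connected_in D (V - S)}"

definition strong_map :: "'v set \<Rightarrow> ('v \<times> 'v) set \<Rightarrow> (('v \<times> 'v) \<times> ('v \<times> 'v)) set \<Rightarrow> bool" where
  "strong_map V D lt \<longleftrightarrow> (\<forall>X\<in>signed_minimal_cuts V D. is_vector lt X)"

definition vertex_cocircuit :: "('v \<times> 'v) set \<Rightarrow> 'v \<Rightarrow> ('v \<times> 'v) sset" where
  "vertex_cocircuit D v = ({(u, w) \<in> D. w = v}, {(u, w) \<in> D. u = v})"

definition twisted_graph ::
  "'v set \<Rightarrow> ('v \<times> 'v) set \<Rightarrow> (('v \<times> 'v) \<times> ('v \<times> 'v)) set \<Rightarrow> ('v \<times> 'v) sset set \<Rightarrow> bool" where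
  "twisted_graph V D prec A \<longleftrightarrow>
     digraph V D \<and>
     strict_partial_order_on D prec \<and>
     three_edge_connected V D \<and>
     A \<subseteq> circ_partial D prec \<and>
     (\<forall>lt\<in>extensions D prec. strong_map V D lt) \<and>
     (\<exists>part :: ('v \<times> 'v) sset \<Rightarrow> 'v. (\<forall>a\<in>A. part a \<in> V) \<and>
        (\<forall>v\<in>V. pairwise_conformal {a\<in>A. part a = v} \<and>
           (\<exists>cs. distinct cs \<and> set cs = {a\<in>A. part a = v} \<and>
                 scomp_list cs = vertex_cocircuit D v)))"

definition respects_order :: "'e set \<Rightarrow> ('e \<times> 'e) set \<Rightarrow> ('e \<Rightarrow> real) \<Rightarrow> bool" where
  "respects_order E prec \<theta> \<longleftrightarrow> (\<forall>e\<in>E. 0 < \<theta> e \<and> \<theta> e < 180) \<and>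
     (\<forall>e f. (e, f) \<in> prec \<longrightarrow> \<theta> e < \<theta> f)"

text \<open>Entry Sigma(a,e): 0 if e is not in the support of a; otherwise, writing the support
  as {e, e', e''} with e' \<prec> e'', it is a(e) sin(\<theta>_{e''} - \<theta>_{e'}) (degrees).\<close>
definition Sigma ::
  "('e \<times> 'e) set \<Rightarrow> ('e \<Rightarrow> real) \<Rightarrow> 'e sset \<Rightarrow> 'e \<Rightarrow> real" where
  "Sigma prec \<theta> a e =
     (if e \<notin> supp a then 0
      else (let p = (THE p. e \<noteq> fst p \<and> e \<noteq> snd p \<and> fst p \<noteq> snd p \<and>
                          supp a = {e, fst p, snd p} \<and> p \<in> prec)
            in of_int (sval a e) * sin ((\<theta> (snd p) - \<theta> (fst p)) * pi / 180)))"

definition is_simplex :: "'r set \<Rightarrow> 'c set \<Rightarrow> ('r \<Rightarrow> 'c \<Rightarrow> real) \<Rightarrow> bool" where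
  "is_simplex R C M \<longleftrightarrow> finite R \<and> finite C \<and> card R = card C + 1 \<and>
     (\<exists>lam. (\<forall>r\<in>R. lam r > 0) \<and> (\<forall>c\<in>C. (\<Sum>r\<in>R. lam r * M r c) = 0) \<and>
        (\<forall>\<mu>. (\<forall>c\<in>C. (\<Sum>r\<in>R. \<mu> r * M r c) = 0) \<longrightarrow> (\<exists>t. \<forall>r\<in>R. \<mu> r = t * lam r)))"

definition simplicial ::
  "('v \<times> 'v) set \<Rightarrow> (('v \<times> 'v) \<times> ('v \<times> 'v)) set \<Rightarrow> ('v \<times> 'v) sset set \<Rightarrow> ('v \<times> 'v) set \<Rightarrow> bool" where
  "simplicial D prec A F \<longleftrightarrow>
     (\<forall>\<theta>. respects_order D prec \<theta> \<longrightarrow> is_simplex A F (Sigma prec \<theta>))"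

definition positive_sequence ::
  "('v \<times> 'v) set \<Rightarrow> ('v \<times> 'v) sset set \<Rightarrow> ('v \<times> 'v) set \<Rightarrow> bool" where
  "positive_sequence D A F \<longleftrightarrow>
     (\<exists>(a :: nat \<Rightarrow> ('v \<times> 'v) sset) (f :: nat \<Rightarrow> 'v \<times> 'v) m.
        m = card A \<and> bij_betw a {1..m} A \<and>
        inj_on f {2..m} \<and> F = f ` {2..m} \<and> F \<subseteq> D \<and>
        (\<forall>j\<in>{2..m}.
           sval (a j) (f j) \<noteq> 0 \<and>
           (\<forall>i\<in>{j<..m}. sval (a i) (f j) = 0) \<and>
           (\<forall>i\<in>{1..<j}. sval (a i) (f j) \<in> {0, - sval (a j) (f j)})))"

end

theory Submission
  imports Defs
begin

lemma add_pair:
  assumes spo: "strict_partial_order_on D r" and x: "x \<in> D" and y: "y \<in> D"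
    and ne: "x \<noteq> y" and nyx: "(y, x) \<notin> r"
  shows "strict_partial_order_on D (r \<union> {(a,b). (a = x \<or> (a,x) \<in> r) \<and> (b = y \<or> (y,b) \<in> r)})"
proof -
  have sub: "r \<subseteq> D \<times> D" and irr: "\<forall>z. (z,z) \<notin> r" and tr: "trans r"
    using spo unfolding strict_partial_order_on_def by auto
  let ?r = "r \<union> {(a,b). (a = x \<or> (a,x) \<in> r) \<and> (b = y \<or> (y,b) \<in> r)}"
  have "?r \<subseteq> D \<times> D" using sub x y by auto
  moreover have "\<forall>z. (z,z) \<notin> ?r"
  proof (intro allI notI)
    fix z assume "(z,z) \<in> ?r"
    then show False using irr tr ne nyx unfolding trans_def by blast
  qed
  moreover have "trans ?r"
    unfolding trans_def
  proof (intro allI impI)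
    fix a b c assume "(a,b) \<in> ?r" "(b,c) \<in> ?r"
    then show "(a,c) \<in> ?r" using tr irr nyx unfolding trans_def by blast
  qed
  ultimately show ?thesis unfolding strict_partial_order_on_def by blast
qed


lemma exists_ext:
  assumes "finite D" "strict_partial_order_on D r"
  shows "\<exists>lt. lt \<in> extensions D r"
  using assms(2)
proof (induction "card (D \<times> D - r)" arbitrary: r rule: less_induct)
  case less
  show ?case
  proof (cases "\<forall>x\<in>D. \<forall>y\<in>D. x \<noteq> y \<longrightarrow> (x, y) \<in> r \<or> (y, x) \<in> r")
    case True
    then have "r \<in> extensions D r" using less.prems unfolding extensions_def strict_total_order_on_def by simp
    then show ?thesis by blast
  next
    case False
    then obtain x y where xy: "x \<in> D" "y \<in> D" "x \<noteq> y" "(x,y) \<notin> r" "(y,x) \<notin> r" by blast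
    let ?r = "r \<union> {(a,b). (a = x \<or> (a,x) \<in> r) \<and> (b = y \<or> (y,b) \<in> r)}"
    have spo: "strict_partial_order_on D ?r" using add_pair[OF less.prems xy(1,2,3,5)] .
    have sub: "?r \<subseteq> D \<times> D" using spo unfolding strict_partial_order_on_def by (rule conjunct1)
    have "(x,y) \<in> D \<times> D - r" using xy by simp
    moreover have "(x,y) \<notin> D \<times> D - ?r" by simp
    ultimately have "D \<times> D - ?r \<subset> D \<times> D - r" by blast
    then have "card (D \<times> D - ?r) < card (D \<times> D - r)"
      using assms(1) by (intro psubset_card_mono) auto
    from less.hyps[OF this spo] obtain lt where "lt \<in> extensions D ?r" by blast
    then have "lt \<in> extensions D r" unfolding extensions_def by simp
    then show ?thesis by blast
  qed
qed

lemma ext_pair: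
  assumes "finite D" "strict_partial_order_on D r" "x \<in> D" "y \<in> D" "x \<noteq> y" "(y,x) \<notin> r"
  shows "\<exists>lt \<in> extensions D r. (x,y) \<in> lt"
proof -
  let ?r = "r \<union> {(a,b). (a = x \<or> (a,x) \<in> r) \<and> (b = y \<or> (y,b) \<in> r)}"
  have spo: "strict_partial_order_on D ?r" using add_pair[OF assms(2-6)] .
  obtain lt where lt: "lt \<in> extensions D ?r" using exists_ext[OF assms(1) spo] by blast
  then have "lt \<in> extensions D r" "(x,y) \<in> lt" unfolding extensions_def by auto
  then show ?thesis by blast
qed
lemma ext_min2:
  assumes fin: "finite D" and spo: "strict_partial_order_on D r" and D: "x \<in> D" "y \<in> D" "m \<in> D"
    and ne: "m \<noteq> x" "m \<noteq> y" and n1: "(x,m) \<notin> r" and n2: "(y,m) \<notin> r"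
  shows "\<exists>lt \<in> extensions D r. (m,x) \<in> lt \<and> (m,y) \<in> lt"
proof -
  let ?r = "r \<union> {(a,b). (a = m \<or> (a,m) \<in> r) \<and> (b = x \<or> (x,b) \<in> r)}"
  have spo1: "strict_partial_order_on D ?r" using add_pair[OF spo D(3) D(1) ne(1) n1] .
  have "(y,m) \<notin> ?r" using n2 ne by auto
  then obtain lt where "lt \<in> extensions D ?r" "(m,y) \<in> lt" using ext_pair[OF fin spo1 D(3) D(2) ne(2)] by blast
  then show ?thesis unfolding extensions_def by blast
qed

lemma ext_max2:
  assumes fin: "finite D" and spo: "strict_partial_order_on D r" and D: "x \<in> D" "y \<in> D" "m \<in> D"
    and ne: "m \<noteq> x" "m \<noteq> y" and n1: "(m,x) \<notin> r" and n2: "(m,y) \<notin> r"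
  shows "\<exists>lt \<in> extensions D r. (x,m) \<in> lt \<and> (y,m) \<in> lt"
proof -
  let ?r = "r \<union> {(a,b). (a = x \<or> (a,x) \<in> r) \<and> (b = m \<or> (m,b) \<in> r)}"
  have spo1: "strict_partial_order_on D ?r" using add_pair[OF spo D(1) D(3) ne(1)[symmetric] n1] .
  have "(m,y) \<notin> ?r" using n2 ne by auto
  then obtain lt where "lt \<in> extensions D ?r" "(y,m) \<in> lt" using ext_pair[OF fin spo1 D(2) D(3) ne(2)[symmetric]] by blast
  then show ?thesis unfolding extensions_def by blast
qed

lemma asymD2: "trans r \<Longrightarrow> (\<And>z. (z,z) \<notin> r) \<Longrightarrow> (a,b) \<in> r \<Longrightarrow> (b,a) \<in> r \<Longrightarrow> False"
  by (metis transD)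

lemma ext_props:
  assumes "lt \<in> extensions D r"
  shows "lt \<subseteq> D \<times> D" "\<And>z. (z,z) \<notin> lt" "trans lt" "r \<subseteq> lt"
  using assms unfolding extensions_def strict_total_order_on_def strict_partial_order_on_def by auto

lemma comparable_ends:
  assumes fin: "finite D" and spo: "strict_partial_order_on D r" and D: "x \<in> D" "y \<in> D" "m \<in> D"
    and ne: "m \<noteq> x" "m \<noteq> y" "x \<noteq> y"
    and H: "\<forall>lt\<in>extensions D r. ((x,m) \<in> lt \<and> (m,y) \<in> lt) \<or> ((y,m) \<in> lt \<and> (m,x) \<in> lt)"
  shows "(x,y) \<in> r \<or> (y,x) \<in> r"
proof (rule ccontr)
  assume nc: "\<not> ((x,y) \<in> r \<or> (y,x) \<in> r)"
  have irr: "\<And>z. (z,z) \<notin> r" and tr: "trans r" using spo unfolding strict_partial_order_on_def by auto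
  have A: "(x,m) \<in> r \<or> (y,m) \<in> r"
  proof (rule ccontr)
    assume "\<not> ?thesis"
    then obtain lt where lt: "lt \<in> extensions D r" "(m,x) \<in> lt" "(m,y) \<in> lt"
      using ext_min2[OF fin spo D ne(1,2)] by blast
    have irl: "\<And>z. (z,z) \<notin> lt" and trl: "trans lt" using ext_props[OF lt(1)] by auto
    have "((x,m) \<in> lt \<and> (m,y) \<in> lt) \<or> ((y,m) \<in> lt \<and> (m,x) \<in> lt)" using H lt(1) by blast
    then show False using lt asymD2[OF trl irl] by blast
  qed
  have B: "(m,x) \<in> r \<or> (m,y) \<in> r"
  proof (rule ccontr)
    assume "\<not> ?thesis"
    then obtain lt where lt: "lt \<in> extensions D r" "(x,m) \<in> lt" "(y,m) \<in> lt"
      using ext_max2[OF fin spo D ne(1,2)] by blast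
    have irl: "\<And>z. (z,z) \<notin> lt" and trl: "trans lt" using ext_props[OF lt(1)] by auto
    have "((x,m) \<in> lt \<and> (m,y) \<in> lt) \<or> ((y,m) \<in> lt \<and> (m,x) \<in> lt)" using H lt(1) by blast
    then show False using lt asymD2[OF trl irl] by blast
  qed
  from A B show False
  proof (elim disjE)
    assume a: "(x,m) \<in> r" "(m,x) \<in> r" have "(x,x) \<in> r" by (rule transD[OF tr a]) then show False using irr by blast
  next
    assume a: "(x,m) \<in> r" "(m,y) \<in> r" have "(x,y) \<in> r" by (rule transD[OF tr a]) then show False using nc by blast
  next
    assume a: "(y,m) \<in> r" "(m,x) \<in> r" have "(y,x) \<in> r" by (rule transD[OF tr a]) then show False using nc by blast
  next
    assume a: "(y,m) \<in> r" "(m,y) \<in> r" have "(y,y) \<in> r" by (rule transD[OF tr a]) then show False using irr by blast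
  qed
qed

lemma comparable_mid:
  assumes fin: "finite D" and spo: "strict_partial_order_on D r" and D: "x \<in> D" "y \<in> D" "m \<in> D"
    and ne: "m \<noteq> x" "m \<noteq> y" "x \<noteq> y"
    and H: "\<forall>lt\<in>extensions D r. ((x,m) \<in> lt \<and> (m,y) \<in> lt) \<or> ((y,m) \<in> lt \<and> (m,x) \<in> lt)"
  shows "(x,m) \<in> r \<or> (m,x) \<in> r"
proof (rule ccontr)
  assume nc: "\<not> ((x,m) \<in> r \<or> (m,x) \<in> r)"
  have c: "(x,y) \<in> r \<or> (y,x) \<in> r" using comparable_ends[OF assms] .
  then show False
  proof
    assume xy: "(x,y) \<in> r"
    obtain lt where lt: "lt \<in> extensions D r" "(m,x) \<in> lt" using ext_pair[OF fin spo D(3) D(1) ne(1)] nc by blast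
    have irl: "\<And>z. (z,z) \<notin> lt" and trl: "trans lt" and sl: "r \<subseteq> lt" using ext_props[OF lt(1)] by auto
    have "((x,m) \<in> lt \<and> (m,y) \<in> lt) \<or> ((y,m) \<in> lt \<and> (m,x) \<in> lt)" using H lt(1) by blast
    moreover have "(x,y) \<in> lt" using xy sl by blast
    ultimately show False using lt asymD2[OF trl irl] transD[OF trl, of y m x] by blast
  next
    assume yx: "(y,x) \<in> r"
    obtain lt where lt: "lt \<in> extensions D r" "(x,m) \<in> lt" using ext_pair[OF fin spo D(1) D(3) ne(1)[symmetric]] nc by blast
    have irl: "\<And>z. (z,z) \<notin> lt" and trl: "trans lt" and sl: "r \<subseteq> lt" using ext_props[OF lt(1)] by auto
    have "((x,m) \<in> lt \<and> (m,y) \<in> lt) \<or> ((y,m) \<in> lt \<and> (m,x) \<in> lt)" using H lt(1) by blast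
    moreover have "(y,x) \<in> lt" using yx sl by blast
    ultimately show False using lt asymD2[OF trl irl] transD[OF trl, of x m y] by blast
  qed
qed



lemma circ_total_elim:
  assumes "X \<in> circ_total lt" "trans lt" "\<And>z. (z,z) \<notin> lt"
  obtains e1 e2 e3 where "(e1,e2) \<in> lt" "(e2,e3) \<in> lt" "e1 \<noteq> e2" "e2 \<noteq> e3" "e1 \<noteq> e3"
    "X = ({e1, e3}, {e2}) \<or> X = ({e2}, {e1, e3})"
proof -
  obtain e1 e2 e3 where h: "(e1,e2) \<in> lt" "(e2,e3) \<in> lt" "X = ({e1, e3}, {e2}) \<or> X = ({e2}, {e1, e3})"
    using assms(1) unfolding circ_total_def by blast
  have "(e1,e3) \<in> lt" using transD[OF assms(2) h(1,2)] .
  then have "e1 \<noteq> e2" "e2 \<noteq> e3" "e1 \<noteq> e3" using h assms(3) by metis+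
  then show ?thesis using that h by blast
qed

lemma circ_mid:
  assumes lt0: "lt0 \<in> extensions D prec" and a: "a \<in> circ_partial D prec"
    and h0: "(e1,e2) \<in> lt0" "(e2,e3) \<in> lt0" "e1 \<noteq> e2" "e2 \<noteq> e3" "e1 \<noteq> e3"
    "a = ({e1, e3}, {e2}) \<or> a = ({e2}, {e1, e3})"
  shows "\<forall>lt\<in>extensions D prec. ((e1,e2) \<in> lt \<and> (e2,e3) \<in> lt) \<or> ((e3,e2) \<in> lt \<and> (e2,e1) \<in> lt)"
proof
  fix lt assume lt: "lt \<in> extensions D prec"
  have "a \<in> circ_total lt" using a lt unfolding circ_partial_def by blast
  moreover have "trans lt" "\<And>z. (z,z) \<notin> lt" using ext_props[OF lt] by auto
  ultimately obtain f1 f2 f3 where f: "(f1,f2) \<in> lt" "(f2,f3) \<in> lt" "f1 \<noteq> f2" "f2 \<noteq> f3" "f1 \<noteq> f3"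
    "a = ({f1, f3}, {f2}) \<or> a = ({f2}, {f1, f3})" by (rule circ_total_elim)
  have "e2 = f2 \<and> ((f1 = e1 \<and> f3 = e3) \<or> (f1 = e3 \<and> f3 = e1))"
    using h0(6) f(6) h0(5) f(5) by (auto simp: doubleton_eq_iff)
  then show "((e1,e2) \<in> lt \<and> (e2,e3) \<in> lt) \<or> ((e3,e2) \<in> lt \<and> (e2,e1) \<in> lt)"
    using f(1,2) by blast
qed

lemma the_pair:
  assumes irr: "\<And>z. (z,z) \<notin> prec" and tr: "trans prec"
    and d: "e \<noteq> u" "e \<noteq> v" "u \<noteq> v" and uv: "(u,v) \<in> prec"
  shows "(THE p. e \<noteq> fst p \<and> e \<noteq> snd p \<and> fst p \<noteq> snd p \<and> {e,u,v} = {e, fst p, snd p} \<and> p \<in> prec) = (u,v)"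
proof (rule the_equality)
  show "e \<noteq> fst (u,v) \<and> e \<noteq> snd (u,v) \<and> fst (u,v) \<noteq> snd (u,v) \<and> {e,u,v} = {e, fst (u,v), snd (u,v)} \<and> (u,v) \<in> prec"
    using d uv by simp
next
  fix p assume p: "e \<noteq> fst p \<and> e \<noteq> snd p \<and> fst p \<noteq> snd p \<and> {e,u,v} = {e, fst p, snd p} \<and> p \<in> prec"
  obtain x y where pxy: "p = (x,y)" by (cases p)
  have xy: "e \<noteq> x" "e \<noteq> y" "x \<noteq> y" "{e,u,v} = {e,x,y}" "(x,y) \<in> prec" using p pxy by auto
  have "{u,v} = {x,y}"
  proof -
    have "{u,v} = {e,u,v} - {e}" using d by auto
    also have "\<dots> = {e,x,y} - {e}" using xy(4) by simp
    also have "\<dots> = {x,y}" using xy by auto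
    finally show ?thesis .
  qed
  then have "(x = u \<and> y = v) \<or> (x = v \<and> y = u)" by (auto simp: doubleton_eq_iff)
  moreover have "(v,u) \<notin> prec" using uv irr asymD2[OF tr irr] by blast
  ultimately show "p = (u,v)" using pxy xy(5) by blast
qed



lemma other_two:
  assumes "e \<in> {e1,e2,e3}" "e1 \<noteq> e2" "e2 \<noteq> e3" "e1 \<noteq> e3"
  shows "\<exists>u v. e \<noteq> u \<and> e \<noteq> v \<and> u \<noteq> v \<and> {e1,e2,e3} = {e,u,v}"
  using assms by auto

lemma circ_sigma:
  assumes fin: "finite D" and spo: "strict_partial_order_on D prec"
    and a: "a \<in> circ_partial D prec" and resp: "respects_order D prec \<theta>"
  shows "\<exists>c>0. Sigma prec \<theta> a e = of_int (sval a e) * c"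
proof (cases "e \<in> supp a")
  case False
  then have "Sigma prec \<theta> a e = 0" "sval a e = 0" unfolding Sigma_def sval_def supp_def by auto
  then show ?thesis by (intro exI[of _ 1]) simp
next
  case True
  have sub: "prec \<subseteq> D \<times> D" and irr: "\<And>z. (z,z) \<notin> prec" and tr: "trans prec"
    using spo unfolding strict_partial_order_on_def by auto
  obtain lt0 where lt0: "lt0 \<in> extensions D prec" using exists_ext[OF fin spo] by blast
  have "a \<in> circ_total lt0" using a lt0 unfolding circ_partial_def by blast
  moreover have "trans lt0" "\<And>z. (z,z) \<notin> lt0" using ext_props[OF lt0] by auto
  ultimately obtain e1 e2 e3 where h: "(e1,e2) \<in> lt0" "(e2,e3) \<in> lt0" "e1 \<noteq> e2" "e2 \<noteq> e3" "e1 \<noteq> e3"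
    "a = ({e1, e3}, {e2}) \<or> a = ({e2}, {e1, e3})" by (rule circ_total_elim)
  have inD: "e1 \<in> D" "e2 \<in> D" "e3 \<in> D" using h(1,2) ext_props(1)[OF lt0] by auto
  have H: "\<forall>lt\<in>extensions D prec. ((e1,e2) \<in> lt \<and> (e2,e3) \<in> lt) \<or> ((e3,e2) \<in> lt \<and> (e2,e1) \<in> lt)"
    using circ_mid[OF lt0 a h] .
  have H': "\<forall>lt\<in>extensions D prec. ((e3,e2) \<in> lt \<and> (e2,e1) \<in> lt) \<or> ((e1,e2) \<in> lt \<and> (e2,e3) \<in> lt)"
    using H by blast
  have c13: "(e1,e3) \<in> prec \<or> (e3,e1) \<in> prec"
    using comparable_ends[OF fin spo inD(1,3,2) h(3)[symmetric] h(4) h(5) H] .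
  have c12: "(e1,e2) \<in> prec \<or> (e2,e1) \<in> prec"
    using comparable_mid[OF fin spo inD(1,3,2) h(3)[symmetric] h(4) h(5) H] .
  have c32: "(e3,e2) \<in> prec \<or> (e2,e3) \<in> prec"
    using comparable_mid[OF fin spo inD(3,1,2) h(4) h(3)[symmetric] h(5)[symmetric] H'] .
  have S: "supp a = {e1,e2,e3}" using h(6) unfolding supp_def by auto
  have comp: "\<forall>x\<in>{e1,e2,e3}. \<forall>y\<in>{e1,e2,e3}. x \<noteq> y \<longrightarrow> (x,y) \<in> prec \<or> (y,x) \<in> prec"
    using c13 c12 c32 by blast
  obtain u0 v0 where uv0: "e \<noteq> u0" "e \<noteq> v0" "u0 \<noteq> v0" "{e1,e2,e3} = {e,u0,v0}"
    using other_two[OF True[unfolded S] h(3,4,5)] by blast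
  have "(u0,v0) \<in> prec \<or> (v0,u0) \<in> prec" using comp uv0 by blast
  then obtain u v where uv: "e \<noteq> u" "e \<noteq> v" "u \<noteq> v" "supp a = {e,u,v}" "(u,v) \<in> prec"
    using uv0 S by (metis insert_commute)
  have p: "(THE p. e \<noteq> fst p \<and> e \<noteq> snd p \<and> fst p \<noteq> snd p \<and> supp a = {e, fst p, snd p} \<and> p \<in> prec) = (u,v)"
    unfolding uv(4) using the_pair[OF irr tr uv(1,2,3,5)] .
  have Sg: "Sigma prec \<theta> a e = of_int (sval a e) * sin ((\<theta> v - \<theta> u) * pi / 180)"
    unfolding Sigma_def using True p by (simp add: Let_def)
  have uvD: "u \<in> D" "v \<in> D" using uv(5) sub by auto
  have th: "0 < \<theta> u" "\<theta> u < 180" "0 < \<theta> v" "\<theta> v < 180" "\<theta> u < \<theta> v"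
    using resp uvD uv(5) unfolding respects_order_def by auto
  have "0 < sin ((\<theta> v - \<theta> u) * pi / 180)"
  proof (rule sin_gt_zero)
    show "0 < (\<theta> v - \<theta> u) * pi / 180" using th by simp
    have "(\<theta> v - \<theta> u) * pi < 180 * pi" using th by (intro mult_strict_right_mono) auto
    then show "(\<theta> v - \<theta> u) * pi / 180 < pi" by simp
  qed
  then show ?thesis using Sg by blast
qed



lemma sum_neg_strict:
  fixes g :: "nat \<Rightarrow> real"
  assumes "finite I" "\<forall>i\<in>I. g i \<le> 0" "k \<in> I" "g k < 0"
  shows "sum g I < 0"
proof -
  have "sum g I = g k + sum g (I - {k})" using assms(1,3) by (simp add: sum.remove)
  moreover have "sum g (I - {k}) \<le> 0" using assms(2) by (intro sum_nonpos) auto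
  ultimately show ?thesis using assms(4) by linarith
qed

lemma tri_simplex:
  fixes M :: "nat \<Rightarrow> nat \<Rightarrow> real"
  assumes m1: "1 \<le> m"
    and diag: "\<forall>j\<in>{2..m}. M j j \<noteq> 0"
    and low: "\<forall>j\<in>{2..m}. \<forall>i\<in>{1..<j}. M i j * M j j \<le> 0"
    and ex: "\<forall>j\<in>{2..m}. \<exists>i\<in>{1..<j}. M i j \<noteq> 0"
    and up: "\<forall>j\<in>{2..m}. \<forall>i\<in>{j<..m}. M i j = 0"
  shows "\<exists>l. l 1 = 1 \<and> (\<forall>i\<in>{1..m}. l i > 0) \<and> (\<forall>j\<in>{2..m}. (\<Sum>i\<in>{1..m}. l i * M i j) = 0) \<and>
     (\<forall>\<mu>. (\<forall>j\<in>{2..m}. (\<Sum>i\<in>{1..m}. \<mu> i * M i j) = 0) \<longrightarrow> (\<forall>i\<in>{1..m}. \<mu> i = \<mu> 1 * l i))"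
proof -
  have red: "(\<Sum>i\<in>{1..m}. g i * M i j) = (\<Sum>i\<in>{1..j}. g i * M i j)" if j: "j \<in> {2..m}" for g j
  proof (rule sum.mono_neutral_right)
    show "finite {1..m}" by simp
    show "{1..j} \<subseteq> {1..m}" using j by auto
    show "\<forall>i\<in>{1..m} - {1..j}. g i * M i j = 0" using up j by auto
  qed
  have split: "(\<Sum>i\<in>{1..j}. g i * M i j) = (\<Sum>i\<in>{1..<j}. g i * M i j) + g j * M j j"
    if "1 \<le> j" for g j
    using that by (simp add: atLeastLessThanSuc_atLeastAtMost[symmetric] sum.atLeastLessThan_Suc)
  have P: "\<exists>l. l 1 = 1 \<and> (\<forall>i\<in>{1..n}. l i > 0) \<and> (\<forall>j\<in>{2..n}. (\<Sum>i\<in>{1..j}. l i * M i j) = 0)"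
    if "1 \<le> n" "n \<le> m" for n
    using that
  proof (induction n)
    case 0 then show ?case by simp
  next
    case (Suc n)
    show ?case
    proof (cases "n = 0")
      case True
      then show ?thesis by (intro exI[of _ "\<lambda>_. 1"]) auto
    next
      case False
      then obtain l where l: "l 1 = 1" "\<forall>i\<in>{1..n}. l i > 0" "\<forall>j\<in>{2..n}. (\<Sum>i\<in>{1..j}. l i * M i j) = 0"
        using Suc by auto
      define j where "j = Suc n"
      have jm: "j \<in> {2..m}" using Suc.prems False j_def by auto
      define S where "S = (\<Sum>i\<in>{1..<j}. l i * M i j)"
      define l' where "l' = l(j := - S / M j j)"
      have Mjj: "M j j \<noteq> 0" using diag jm by blast
      obtain k where k: "k \<in> {1..<j}" "M k j \<noteq> 0" using ex jm by blast
      have "S * M j j = (\<Sum>i\<in>{1..<j}. l i * (M i j * M j j))"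
        unfolding S_def by (simp add: sum_distrib_right mult.assoc)
      also have "\<dots> < 0"
      proof (rule sum_neg_strict)
        show "\<forall>i\<in>{1..<j}. l i * (M i j * M j j) \<le> 0"
        proof
          fix i assume i: "i \<in> {1..<j}"
          have "l i > 0" using l(2) i j_def by auto
          moreover have "M i j * M j j \<le> 0" using low jm i by blast
          ultimately show "l i * (M i j * M j j) \<le> 0" by (simp add: mult_nonneg_nonpos less_imp_le)
        qed
        show "k \<in> {1..<j}" by (rule k(1))
        have "l k > 0" using l(2) k(1) j_def by auto
        moreover have "M k j * M j j < 0"
          using low jm k Mjj by (metis less_eq_real_def mult_eq_0_iff)
        ultimately show "l k * (M k j * M j j) < 0" by (simp add: mult_pos_neg)
      qed auto
      finally have SM: "S * M j j < 0" .
      have pos: "- S / M j j > 0"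
      proof (cases "M j j > 0")
        case True
        then have "S < 0" using SM by (simp add: mult_less_0_iff)
        then show ?thesis using True by (simp add: divide_neg_pos)
      next
        case False
        then have "M j j < 0" using Mjj by simp
        then have "S > 0" using SM by (simp add: mult_less_0_iff)
        then show ?thesis using \<open>M j j < 0\<close> by (simp add: divide_pos_neg)
      qed
      have "l' 1 = 1" using l(1) False j_def l'_def by auto
      moreover have "\<forall>i\<in>{1..Suc n}. l' i > 0"
        using l(2) pos unfolding l'_def j_def by (auto simp: le_Suc_eq)
      moreover have "\<forall>jj\<in>{2..Suc n}. (\<Sum>i\<in>{1..jj}. l' i * M i jj) = 0"
      proof
        fix jj assume jj: "jj \<in> {2..Suc n}"
        show "(\<Sum>i\<in>{1..jj}. l' i * M i jj) = 0"
        proof (cases "jj = j")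
          case True
          have "(\<Sum>i\<in>{1..jj}. l' i * M i jj) = (\<Sum>i\<in>{1..<j}. l' i * M i j) + l' j * M j j"
            using split[of j l'] True j_def by simp
          also have "(\<Sum>i\<in>{1..<j}. l' i * M i j) = S"
            unfolding S_def l'_def by (intro sum.cong) auto
          also have "l' j * M j j = - S" using Mjj unfolding l'_def by simp
          finally show ?thesis by simp
        next
          case False
          then have "jj \<in> {2..n}" using jj j_def by auto
          moreover have "(\<Sum>i\<in>{1..jj}. l' i * M i jj) = (\<Sum>i\<in>{1..jj}. l i * M i jj)"
            using \<open>jj \<in> {2..n}\<close> unfolding l'_def j_def by (intro sum.cong) auto
          ultimately show ?thesis using l(3) by simp
        qed
      qed
      ultimately show ?thesis by blast
    qed
  qed
  obtain l where l: "l 1 = 1" "\<forall>i\<in>{1..m}. l i > 0" "\<forall>j\<in>{2..m}. (\<Sum>i\<in>{1..j}. l i * M i j) = 0"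
    using P[OF m1 order_refl] by blast
  have colsum: "\<forall>j\<in>{2..m}. (\<Sum>i\<in>{1..m}. l i * M i j) = 0" using l(3) red by simp
  have uniq: "\<forall>i\<in>{1..m}. \<mu> i = \<mu> 1 * l i"
    if mu: "\<forall>j\<in>{2..m}. (\<Sum>i\<in>{1..m}. \<mu> i * M i j) = 0" for \<mu>
  proof -
    have "\<mu> j = \<mu> 1 * l j" if "j \<in> {1..m}" for j
      using that
    proof (induction j rule: less_induct)
      case (less j)
      show ?case
      proof (cases "j = 1")
        case True then show ?thesis using l(1) by simp
      next
        case False
        then have jm: "j \<in> {2..m}" using less.prems by auto
        have Mjj: "M j j \<noteq> 0" using diag jm by blast
        have IH: "\<forall>i\<in>{1..<j}. \<mu> i = \<mu> 1 * l i"
        proof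
          fix i assume i: "i \<in> {1..<j}"
          then have "i < j" "i \<in> {1..m}" using jm by auto
          then show "\<mu> i = \<mu> 1 * l i" by (rule less.IH)
        qed
        have j1: "1 \<le> j" using jm by simp
        have "0 = (\<Sum>i\<in>{1..m}. \<mu> i * M i j)" using bspec[OF mu jm] by simp
        also have "\<dots> = (\<Sum>i\<in>{1..j}. \<mu> i * M i j)" by (rule red[OF jm])
        also have "\<dots> = (\<Sum>i\<in>{1..<j}. \<mu> i * M i j) + \<mu> j * M j j" by (rule split[OF j1])
        finally have s1: "(\<Sum>i\<in>{1..<j}. \<mu> i * M i j) + \<mu> j * M j j = 0" by simp
        have "0 = (\<Sum>i\<in>{1..j}. l i * M i j)" using bspec[OF l(3) jm] by simp
        also have "\<dots> = (\<Sum>i\<in>{1..<j}. l i * M i j) + l j * M j j" by (rule split[OF j1])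
        finally have s2: "(\<Sum>i\<in>{1..<j}. l i * M i j) = - (l j * M j j)" by simp
        have "(\<Sum>i\<in>{1..<j}. \<mu> i * M i j) = (\<Sum>i\<in>{1..<j}. \<mu> 1 * (l i * M i j))"
        proof (rule sum.cong)
          fix i assume "i \<in> {1..<j}"
          then have e: "\<mu> i = \<mu> 1 * l i" using IH by blast
          show "\<mu> i * M i j = \<mu> 1 * (l i * M i j)" unfolding e by (rule mult.assoc)
        qed simp
        also have "\<dots> = \<mu> 1 * (\<Sum>i\<in>{1..<j}. l i * M i j)" by (simp add: sum_distrib_left)
        also have "\<dots> = - (\<mu> 1 * l j * M j j)" using s2 by simp
        finally have "\<mu> j * M j j = \<mu> 1 * l j * M j j" using s1 by linarith
        then show ?thesis using Mjj by simp
      qed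
    qed
    then show ?thesis by blast
  qed
  show ?thesis using l(1,2) colsum uniq by blast
qed



lemma sval_scomp: "sval (scomp X Y) e = (if sval X e \<noteq> 0 then sval X e else sval Y e)"
  unfolding sval_def scomp_def supp_def by auto

lemma scomp_list_sval:
  "sval (scomp_list cs) e \<noteq> 0 \<Longrightarrow> \<exists>c\<in>set cs. sval c e = sval (scomp_list cs) e"
proof (induction cs)
  case Nil then show ?case by (simp add: scomp_list_def szero_def sval_def)
next
  case (Cons c cs)
  have eq: "scomp_list (c # cs) = scomp c (scomp_list cs)" by (simp add: scomp_list_def)
  show ?case
  proof (cases "sval c e \<noteq> 0")
    case True then show ?thesis unfolding eq sval_scomp by simp
  next
    case False
    then have "sval (scomp_list (c#cs)) e = sval (scomp_list cs) e" unfolding eq sval_scomp by simp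
    then show ?thesis using Cons by auto
  qed
qed

lemma sval_vals: "sval X e \<in> {1, -1, 0}" unfolding sval_def by auto

lemma edge_signs:
  assumes tg: "twisted_graph V D prec A" and e: "e \<in> D"
  shows "\<exists>c\<in>A. sval c e = 1" "\<exists>c\<in>A. sval c e = -1"
proof -
  obtain u w where uw: "e = (u,w)" by (cases e)
  have dg: "digraph V D" using tg unfolding twisted_graph_def by blast
  then have uwV: "u \<in> V" "w \<in> V" and ne: "u \<noteq> w" using e uw unfolding digraph_def by auto
  obtain part :: "('a \<times> 'a) sset \<Rightarrow> 'a" where part:
    "\<forall>v\<in>V. \<exists>cs. distinct cs \<and> set cs = {a\<in>A. part a = v} \<and> scomp_list cs = vertex_cocircuit D v"
    using tg unfolding twisted_graph_def by blast
  have g: "\<exists>c\<in>A. sval c e = sval (vertex_cocircuit D v) e" if v: "v \<in> V" "sval (vertex_cocircuit D v) e \<noteq> 0" for v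
  proof -
    obtain cs where cs: "set cs = {a\<in>A. part a = v}" "scomp_list cs = vertex_cocircuit D v" using part v(1) by blast
    then obtain c where "c \<in> set cs" "sval c e = sval (vertex_cocircuit D v) e"
      using scomp_list_sval[of cs e] v(2) by auto
    then show ?thesis using cs(1) by auto
  qed
  have "sval (vertex_cocircuit D w) e = 1" using e uw unfolding vertex_cocircuit_def sval_def by auto
  then show "\<exists>c\<in>A. sval c e = 1" using g[OF uwV(2)] by simp
  have "sval (vertex_cocircuit D u) e = -1" using e uw ne unfolding vertex_cocircuit_def sval_def by auto
  then show "\<exists>c\<in>A. sval c e = -1" using g[OF uwV(1)] by simp
qed

lemma A_nonempty:
  assumes tg: "twisted_graph V D prec A"
  shows "A \<noteq> {}"
proof
  assume A: "A = {}"
  have tec: "three_edge_connected V D" using tg unfolding twisted_graph_def by blast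
  then have cV: "card V > 1" and all: "\<forall>R. R \<subseteq> D \<and> card R < 3 \<longrightarrow> connected_in (D - R) V"
    unfolding three_edge_connected_def by auto
  have "connected_in (D - {}) V" using spec[OF all, of "{}"] by simp
  then have con: "connected_in D V" by simp
  have "V \<noteq> {}" using cV by auto
  then obtain v where v: "v \<in> V" by blast
  have "\<not> V \<subseteq> {v}"
  proof
    assume "V \<subseteq> {v}"
    then have "card V \<le> card {v}" by (rule card_mono[rotated]) simp
    then show False using cV by simp
  qed
  then obtain w where w: "w \<in> V" "w \<noteq> v" by blast
  have vw: "(v,w) \<in> (adj_in D V)\<^sup>*" using con v w unfolding connected_in_def by blast
  obtain z where "(v,z) \<in> adj_in D V"
    using vw
  proof (cases rule: converse_rtranclE)
    case base then show ?thesis using w(2) by simp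
  next
    case (step y) then show ?thesis using that by blast
  qed
  then have ed: "(v,z) \<in> D \<or> (z,v) \<in> D" unfolding adj_in_def by auto
  obtain part :: "('a \<times> 'a) sset \<Rightarrow> 'a" where part:
    "\<forall>v\<in>V. \<exists>cs. distinct cs \<and> set cs = {a\<in>A. part a = v} \<and> scomp_list cs = vertex_cocircuit D v"
    using tg unfolding twisted_graph_def by blast
  obtain cs where cs: "set cs = {a\<in>A. part a = v}" "scomp_list cs = vertex_cocircuit D v" using part v by blast
  then have "cs = []" using A by simp
  then have "vertex_cocircuit D v = ({},{})" using cs(2) by (simp add: scomp_list_def szero_def)
  then show False using ed unfolding vertex_cocircuit_def by auto
qed



theorem mainTheorem15:
  fixes V :: "'v set" and D :: "('v \<times> 'v) set"
    and prec :: "(('v \<times> 'v) \<times> ('v \<times> 'v)) set"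
    and A :: "('v \<times> 'v) sset set" and F :: "('v \<times> 'v) set"
  assumes "twisted_graph V D prec A"
    and "positive_sequence D A F"
  shows "simplicial D prec A F"
proof -
  have tg: "twisted_graph V D prec A" by fact
  have dg: "digraph V D" and spo: "strict_partial_order_on D prec" and Acirc: "A \<subseteq> circ_partial D prec"
    using tg unfolding twisted_graph_def by auto
  have finD: "finite D"
  proof -
    have fV: "finite V" and sD: "D \<subseteq> V \<times> V" using dg unfolding digraph_def by (blast, blast)
    then show ?thesis by (meson finite_SigmaI finite_subset)
  qed
  obtain a :: "nat \<Rightarrow> ('v \<times> 'v) sset" and f :: "nat \<Rightarrow> 'v \<times> 'v" and m where
    ps0: "m = card A \<and> bij_betw a {1..m} A \<and> inj_on f {2..m} \<and> F = f ` {2..m} \<and> F \<subseteq> D \<and>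
        (\<forall>j\<in>{2..m}.
           sval (a j) (f j) \<noteq> 0 \<and>
           (\<forall>i\<in>{j<..m}. sval (a i) (f j) = 0) \<and>
           (\<forall>i\<in>{1..<j}. sval (a i) (f j) \<in> {0, - sval (a j) (f j)}))"
    using assms(2) unfolding positive_sequence_def by (elim exE) (rule that)
  note ps = ps0[THEN conjunct1] ps0[THEN conjunct2, THEN conjunct1]
    ps0[THEN conjunct2, THEN conjunct2, THEN conjunct1]
    ps0[THEN conjunct2, THEN conjunct2, THEN conjunct2, THEN conjunct1]
    ps0[THEN conjunct2, THEN conjunct2, THEN conjunct2, THEN conjunct2, THEN conjunct1]
    ps0[THEN conjunct2, THEN conjunct2, THEN conjunct2, THEN conjunct2, THEN conjunct2]
  have finA: "finite A" using ps(2) bij_betw_finite by blast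
  have m1: "1 \<le> m" using A_nonempty[OF tg] finA ps(1) by (simp add: Suc_leI card_gt_0_iff)
  have injA: "inj_on a {1..m}" and imA: "a ` {1..m} = A" using ps(2) unfolding bij_betw_def by auto
  have cardF: "card F = m - 1" using ps(3,4) by (simp add: card_image)
  have cards: "card A = card F + 1" using cardF ps(1) m1 by simp
  have finF: "finite F" using ps(4) by simp
  show ?thesis
    unfolding simplicial_def
  proof (intro allI impI)
    fix \<theta> assume resp: "respects_order D prec \<theta>"
    define M where "M i j = Sigma prec \<theta> (a i) (f j)" for i j
    have aA: "a i \<in> A" if "i \<in> {1..m}" for i using imA that by blast
    have Mc: "\<exists>c>0. M i j = of_int (sval (a i) (f j)) * c" if "i \<in> {1..m}" for i j
      unfolding M_def using circ_sigma[OF finD spo _ resp] Acirc aA[OF that] by blast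
    have Mz: "M i j = 0 \<longleftrightarrow> sval (a i) (f j) = 0" if "i \<in> {1..m}" for i j
      using Mc[OF that, of j] by auto
    have diag: "\<forall>j\<in>{2..m}. M j j \<noteq> 0" using ps(6) Mz by auto
    have low: "\<forall>j\<in>{2..m}. \<forall>i\<in>{1..<j}. M i j * M j j \<le> 0"
    proof (intro ballI)
      fix j i assume j: "j \<in> {2..m}" and i: "i \<in> {1..<j}"
      have im: "i \<in> {1..m}" and jm: "j \<in> {1..m}" using i j by auto
      obtain c1 where c1: "c1 > 0" "M i j = of_int (sval (a i) (f j)) * c1" using Mc[OF im] by blast
      obtain c2 where c2: "c2 > 0" "M j j = of_int (sval (a j) (f j)) * c2" using Mc[OF jm] by blast
      have sv: "sval (a i) (f j) \<in> {0, - sval (a j) (f j)}" using ps(6) j i by blast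
      have "sval (a i) (f j) * sval (a j) (f j) \<le> 0"
        using sv by auto
      then have "real_of_int (sval (a i) (f j)) * real_of_int (sval (a j) (f j)) \<le> 0"
        by (metis of_int_le_0_iff of_int_mult)
      moreover have "M i j * M j j = (real_of_int (sval (a i) (f j)) * real_of_int (sval (a j) (f j))) * (c1 * c2)"
        using c1 c2 by (simp add: algebra_simps)
      moreover have "c1 * c2 > 0" using c1 c2 by simp
      ultimately show "M i j * M j j \<le> 0" by (simp add: mult_nonpos_nonneg)
    qed
    have ex: "\<forall>j\<in>{2..m}. \<exists>i\<in>{1..<j}. M i j \<noteq> 0"
    proof
      fix j assume j: "j \<in> {2..m}"
      have fD: "f j \<in> D" using ps(4,5) j by blast
      have s: "sval (a j) (f j) \<noteq> 0" using ps(6) j by blast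
      have "\<exists>c\<in>A. sval c (f j) = - sval (a j) (f j)"
        using edge_signs[OF tg fD] sval_vals[of "a j" "f j"] s by auto
      then obtain i where i: "i \<in> {1..m}" "sval (a i) (f j) = - sval (a j) (f j)" using imA by blast
      have "i \<noteq> j" using i(2) s by auto
      moreover have "\<not> i > j" using i ps(6) j s by fastforce
      ultimately have "i \<in> {1..<j}" using i(1) by auto
      moreover have "M i j \<noteq> 0" using Mz[OF i(1)] i(2) s by simp
      ultimately show "\<exists>i\<in>{1..<j}. M i j \<noteq> 0" by blast
    qed
    have up: "\<forall>j\<in>{2..m}. \<forall>i\<in>{j<..m}. M i j = 0"
      using ps(6) Mz by auto
    obtain l where l: "l 1 = 1" "\<forall>i\<in>{1..m}. l i > 0" "\<forall>j\<in>{2..m}. (\<Sum>i\<in>{1..m}. l i * M i j) = 0"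
      "\<forall>\<mu>. (\<forall>j\<in>{2..m}. (\<Sum>i\<in>{1..m}. \<mu> i * M i j) = 0) \<longrightarrow> (\<forall>i\<in>{1..m}. \<mu> i = \<mu> 1 * l i)"
      using tri_simplex[OF m1 diag low ex up] by blast
    define lam where "lam r = l (inv_into {1..m} a r)" for r
    have inv: "inv_into {1..m} a (a i) = i" if "i \<in> {1..m}" for i using inv_into_f_f[OF injA that] .
    have reidx: "(\<Sum>r\<in>A. g r) = (\<Sum>i\<in>{1..m}. g (a i))" for g :: "_ \<Rightarrow> real"
      using sum.reindex_bij_betw[OF ps(2), of g] by simp
    have lpos: "\<forall>r\<in>A. lam r > 0"
    proof
      fix r assume "r \<in> A"
      then obtain i where "i \<in> {1..m}" "r = a i" using imA by blast
      then show "lam r > 0" using l(2) inv unfolding lam_def by simp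
    qed
    have colF: "(\<Sum>r\<in>A. g r * Sigma prec \<theta> r c) = (\<Sum>i\<in>{1..m}. g (a i) * M i j)"
      if "c = f j" for g c j
      unfolding reidx M_def that ..
    have lcol: "\<forall>c\<in>F. (\<Sum>r\<in>A. lam r * Sigma prec \<theta> r c) = 0"
    proof
      fix c assume "c \<in> F"
      then obtain j where j: "j \<in> {2..m}" "c = f j" using ps(4) by blast
      have "(\<Sum>r\<in>A. lam r * Sigma prec \<theta> r c) = (\<Sum>i\<in>{1..m}. lam (a i) * M i j)" by (rule colF[OF j(2)])
      also have "\<dots> = (\<Sum>i\<in>{1..m}. l i * M i j)" 
      proof (rule sum.cong)
        fix i assume "i \<in> {1..m}"
        then show "lam (a i) * M i j = l i * M i j" unfolding lam_def using inv by metis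
      qed simp
      also have "\<dots> = 0" using l(3) j(1) by blast
      finally show "(\<Sum>r\<in>A. lam r * Sigma prec \<theta> r c) = 0" .
    qed
    have muq: "\<exists>t. \<forall>r\<in>A. \<mu> r = t * lam r"
      if mu: "\<forall>c\<in>F. (\<Sum>r\<in>A. \<mu> r * Sigma prec \<theta> r c) = 0" for \<mu>
    proof -
      have "\<forall>j\<in>{2..m}. (\<Sum>i\<in>{1..m}. \<mu> (a i) * M i j) = 0"
      proof
        fix j assume j: "j \<in> {2..m}"
        have "f j \<in> F" using ps(4) j by blast
        then have "(\<Sum>r\<in>A. \<mu> r * Sigma prec \<theta> r (f j)) = 0" using mu by blast
        then show "(\<Sum>i\<in>{1..m}. \<mu> (a i) * M i j) = 0" using colF[of "f j" j \<mu>] by simp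
      qed
      then have e: "\<forall>i\<in>{1..m}. \<mu> (a i) = \<mu> (a 1) * l i" using spec[OF l(4), of "\<lambda>i. \<mu> (a i)"] by blast
      have "\<forall>r\<in>A. \<mu> r = \<mu> (a 1) * lam r"
      proof
        fix r assume "r \<in> A"
        then obtain i where i: "i \<in> {1..m}" "r = a i" using imA by blast
        have ei: "\<mu> (a i) = \<mu> (a 1) * l i" using e i(1) by blast
        show "\<mu> r = \<mu> (a 1) * lam r" unfolding lam_def i(2) inv[OF i(1)] by (rule ei)
      qed
      then show ?thesis by blast
    qed
    show "is_simplex A F (Sigma prec \<theta>)"
      unfolding is_simplex_def using finA finF cards lpos lcol muq by blast
  qed
qed


end
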